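(* For $m=1,2$ let $L_m:\mathbb{R}^4\to\mathbb{R}$ be linear functionals such that $\{\xi_1-\xi_2+\xi_3-\xi_4,L_1,L_2\}$ is linearly independent. Then there is $C<\infty$ such that for all nonnegative measurable $g_1,\dots,g_4\in L^2(\mathbb{R})$ and all measurable $E_1,E_2\subset\mathbb{R}$, \[ \int_\Xi\prod_{n=1}^4g_n(\xi_n)\prod_{m=1}^2\chi_{E_m}(L_m(\vec\xi))\,d\lambda(\vec\xi)\le C\prod_{m=1}^2|E_m|^{1/2}\prod_{n=1}^4\|g_n\|_{L^2}. \]
   Context: $\Xi=\{\vec\xi\in\mathbb{R}^4:\xi_1-\xi_2+\xi_3-\xi_4=0\}$ and $\lambda$ is (appropriately normalized) Lebesgue measure on $\Xi$; $\xi_1-\xi_2+\xi_3-\xi_4$ denotes the corresponding linear functional on $\mathbb{R}^4$. $\chi_E$ is the indicator of $E$. *)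

theory Defs
  imports "HOL-Analysis.Analysis"
begin

definition ell0 :: "real^4 \<Rightarrow> real" where
  "ell0 \<xi> = \<xi>$1 - \<xi>$2 + \<xi>$3 - \<xi>$4"

text \<open>Parametrization of the hyperplane Xi = {ell0 = 0} by its first three coordinates;
  Lebesgue measure on Xi is (up to a normalizing constant) the push-forward of
  Lebesgue measure on R^3 under this map.\<close>
definition xi_of :: "real^3 \<Rightarrow> real^4" where
  "xi_of x = vector [x$1, x$2, x$3, x$1 - x$2 + x$3]"

definition ennsqrt :: "ennreal \<Rightarrow> ennreal" where
  "ennsqrt x = (if x = \<infinity> then \<infinity> else ennreal (sqrt (enn2real x)))"

definition L2norm :: "(real \<Rightarrow> real) \<Rightarrow> real" where
  "L2norm g = sqrt (LINT x|lborel. (g x)^2)"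

end

theory Submission
  imports Defs
begin


lemma lin_meas: "linear (f::'a::euclidean_space \<Rightarrow> 'b::euclidean_space) \<Longrightarrow> f \<in> borel_measurable borel"
  by (simp add: borel_measurable_continuous_onI linear_continuous_on linear_conv_bounded_linear)

lemma lborel_linear:
  fixes T :: "real^3 \<Rightarrow> real^3"
  assumes lT: "linear T" and dT: "det (matrix T) \<noteq> 0"
  shows "lborel = density (distr lborel borel T) (\<lambda>_. ennreal \<bar>det (matrix T)\<bar>)"
proof (rule lborel_eqI)
  have "inj T" using det_nz_iff_inj lT dT by blast
  then obtain h where lh: "linear h" and hT: "\<And>x. h (T x) = x" and Th: "\<And>x. T (h x) = x"
    using linear_injective_isomorphism[OF lT] by metis
  have "matrix T ** matrix h = mat 1"
    using matrix_compose[OF lh lT] Th by (simp add: o_def matrix_id_mat_1 flip: id_def)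
  then have dd: "det (matrix T) * det (matrix h) = 1"
    by (metis det_I det_mul)
  have [measurable]: "T \<in> borel_measurable borel"
    using lT by (rule lin_meas)
  fix l u :: "real^3" assume le: "\<And>b. b \<in> Basis \<Longrightarrow> l \<bullet> b \<le> u \<bullet> b"
  have pre: "T -` box l u = h ` box l u"
    using hT Th by (auto simp: image_iff) (metis)
  have bm: "T -` box l u \<in> sets borel"
    using measurable_sets_borel[OF lin_meas[OF lT], of "box l u"] by simp
  have lm: "h ` box l u \<in> lmeasurable" and mm: "measure lebesgue (h ` box l u) = \<bar>det (matrix h)\<bar> * measure lebesgue (box l u)"
    using measurable_linear_image measure_linear_image lh lmeasurable_box by blast+
  have "emeasure lborel (T -` box l u) = emeasure lebesgue (T -` box l u)"
    using bm by (simp add: emeasure_completion)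
  also have "\<dots> = ennreal (\<bar>det (matrix h)\<bar> * measure lebesgue (box l u))"
    using lm mm pre by (simp add: emeasure_eq_measure2)
  finally have e: "emeasure lborel (T -` box l u) = ennreal (\<bar>det (matrix h)\<bar> * measure lebesgue (box l u))" .
  have mb: "measure lebesgue (box l u) = (\<Prod>b\<in>Basis. (u - l) \<bullet> b)"
    using le by (simp add: measure_completion)
  have "emeasure (density (distr lborel borel T) (\<lambda>_. ennreal \<bar>det (matrix T)\<bar>)) (box l u)
      = ennreal \<bar>det (matrix T)\<bar> * emeasure lborel (T -` box l u)"
    by (simp add: emeasure_density_const emeasure_distr)
  also have "\<dots> = ennreal (\<bar>det (matrix T)\<bar> * \<bar>det (matrix h)\<bar> * measure lebesgue (box l u))"
    by (simp add: e ennreal_mult' mult.assoc)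
  also have "\<bar>det (matrix T)\<bar> * \<bar>det (matrix h)\<bar> = 1" using dd by (metis abs_mult abs_one)
  finally show "emeasure (density (distr lborel borel T) (\<lambda>_. ennreal \<bar>det (matrix T)\<bar>)) (box l u) = (\<Prod>b\<in>Basis. (u - l) \<bullet> b)"
    using mb le by (simp add: prod_nonneg inner_diff_left)
qed simp

lemma prod_3: "prod f (UNIV::3 set) = f 1 * f 2 * f 3"
  unfolding UNIV_3 by (simp add: ac_simps)

lemma prod_Basis_vec3:
  fixes F :: "3 \<Rightarrow> 'b::comm_monoid_mult"
  shows "(\<Prod>b\<in>(Basis::(real^3) set). F (axis_index b)) = (\<Prod>i\<in>UNIV. F i)"
  by (simp add: Basis_vec_def UNION_singleton_eq_range prod.reindex axis_eq_axis inj_on_def)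

lemma nn_int_prod3:
  fixes T :: "real^3 \<Rightarrow> real^3" and G :: "3 \<Rightarrow> real \<Rightarrow> ennreal"
  assumes lT: "linear T" and dT: "det (matrix T) \<noteq> 0"
    and Gm[measurable]: "\<And>i. G i \<in> borel_measurable borel"
  shows "(\<integral>\<^sup>+x. (\<Prod>i\<in>UNIV. G i (T x $ i)) \<partial>lborel)
       = ennreal (1 / \<bar>det (matrix T)\<bar>) * (\<Prod>i\<in>UNIV. \<integral>\<^sup>+t. G i t \<partial>lborel)"
proof -
  have [measurable]: "T \<in> borel_measurable borel" using lT by (rule lin_meas)
  define f where "f y = (\<Prod>i\<in>UNIV. G i (y $ i))" for y :: "real^3"
  have fm[measurable]: "f \<in> borel_measurable borel" unfolding f_def by measurable
  have "(\<integral>\<^sup>+y. f y \<partial>lborel) = (\<integral>\<^sup>+(y::real^3). (\<Prod>b\<in>Basis. G (axis_index b) (y \<bullet> b)) \<partial>lborel)"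
  proof -
    have "f y = (\<Prod>b\<in>(Basis::(real^3) set). G (axis_index b) (y \<bullet> b))" for y
    proof -
      have "(\<Prod>b\<in>(Basis::(real^3) set). G (axis_index b) (y \<bullet> b))
          = (\<Prod>b\<in>(Basis::(real^3) set). (\<lambda>i. G i (y $ i)) (axis_index b))"
        by (intro prod.cong refl) (metis axis_index cart_eq_inner_axis)
      also have "\<dots> = (\<Prod>i\<in>UNIV. G i (y $ i))"
        by (rule prod_Basis_vec3)
      finally show ?thesis unfolding f_def by simp
    qed
    then show ?thesis by simp
  qed
  also have "\<dots> = (\<Prod>b\<in>(Basis::(real^3) set). \<integral>\<^sup>+t. G (axis_index b) t \<partial>lborel)"
    by (rule nn_integral_lborel_prod) auto
  also have "\<dots> = (\<Prod>i\<in>UNIV. \<integral>\<^sup>+t. G i t \<partial>lborel)"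
    by (rule prod_Basis_vec3)
  finally have A: "(\<integral>\<^sup>+y. f y \<partial>lborel) = (\<Prod>i\<in>UNIV. \<integral>\<^sup>+t. G i t \<partial>lborel)" .
  have "(\<integral>\<^sup>+y. f y \<partial>lborel) = (\<integral>\<^sup>+y. f y \<partial>density (distr lborel borel T) (\<lambda>_. ennreal \<bar>det (matrix T)\<bar>))"
    using lborel_linear[OF lT dT] by simp
  also have "\<dots> = ennreal \<bar>det (matrix T)\<bar> * (\<integral>\<^sup>+x. f (T x) \<partial>lborel)"
    by (simp add: nn_integral_density nn_integral_distr nn_integral_cmult)
  finally have B: "(\<integral>\<^sup>+x. f (T x) \<partial>lborel) = ennreal (1 / \<bar>det (matrix T)\<bar>) * (\<integral>\<^sup>+y. f y \<partial>lborel)"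
    using dT by (simp add: ennreal_mult'[symmetric] mult.assoc[symmetric] ennreal_1 flip: ennreal_mult)
  show ?thesis using A B by (simp add: f_def)
qed



lemma half_bound:
  fixes u v w :: "real^3 \<Rightarrow> real" and G1 G2 :: "real \<Rightarrow> real" and E :: "real set"
  assumes lu: "linear u" and lv: "linear v" and lw: "linear w"
    and D: "det (matrix (\<lambda>x. vector [u x, v x, w x] :: real^3)) \<noteq> 0"
    and [measurable]: "G1 \<in> borel_measurable borel" "G2 \<in> borel_measurable borel" "E \<in> sets borel"
    and n1: "\<And>t. 0 \<le> G1 t" and n2: "\<And>t. 0 \<le> G2 t"
  shows "(\<integral>\<^sup>+x. (ennreal (G1 (u x) * G2 (v x) * indicator E (w x)))^2 \<partial>lborel)
     = ennreal (1 / \<bar>det (matrix (\<lambda>x. vector [u x, v x, w x] :: real^3))\<bar>) *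
       ((\<integral>\<^sup>+t. ennreal ((G1 t)^2) \<partial>lborel) * (\<integral>\<^sup>+t. ennreal ((G2 t)^2) \<partial>lborel) * emeasure lborel E)"
proof -
  define T where "T x = (vector [u x, v x, w x] :: real^3)" for x
  have lT: "linear T"
    unfolding T_def
    by (rule linearI) (simp_all add: vec_eq_iff forall_3 linear_add[OF lu] linear_add[OF lv] linear_add[OF lw]
        linear_cmul[OF lu] linear_cmul[OF lv] linear_cmul[OF lw])
  define G where "G i t = (if i = (1::3) then ennreal ((G1 t)^2) else if i = 2 then ennreal ((G2 t)^2) else indicator E t)" for i t
  have Gm: "G i \<in> borel_measurable borel" for i unfolding G_def by measurable
  have eq: "(ennreal (G1 (u x) * G2 (v x) * indicator E (w x)))^2 = (\<Prod>i\<in>UNIV. G i (T x $ i))" for x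
  proof -
    have r: "(\<Prod>i\<in>UNIV. G i (T x $ i)) = ennreal ((G1 (u x))^2) * (ennreal ((G2 (v x))^2) * indicator E (w x))"
      unfolding prod_3 G_def T_def by (simp add: mult.assoc)
    have s1: "(G1 (u x) * G2 (v x) * indicator E (w x))^2 = (G1 (u x))^2 * ((G2 (v x))^2 * indicator E (w x))"
      by (simp add: indicator_def power_mult_distrib)
    have "(ennreal (G1 (u x) * G2 (v x) * indicator E (w x)))^2 = ennreal ((G1 (u x) * G2 (v x) * indicator E (w x))^2)"
      by (rule ennreal_power) (simp add: n1 n2)
    also have "\<dots> = ennreal ((G1 (u x))^2) * (ennreal ((G2 (v x))^2) * ennreal (indicator E (w x)))"
      unfolding s1 by (simp add: ennreal_mult)
    finally show ?thesis unfolding r by (simp add: ennreal_indicator)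
  qed
  have "(\<integral>\<^sup>+x. (ennreal (G1 (u x) * G2 (v x) * indicator E (w x)))^2 \<partial>lborel)
     = (\<integral>\<^sup>+x. (\<Prod>i\<in>UNIV. G i (T x $ i)) \<partial>lborel)" by (simp add: eq)
  also have "\<dots> = ennreal (1 / \<bar>det (matrix T)\<bar>) * (\<Prod>i\<in>UNIV. \<integral>\<^sup>+t. G i t \<partial>lborel)"
    by (rule nn_int_prod3[OF lT _ Gm]) (use D in \<open>simp add: T_def[abs_def]\<close>)
  also have "(\<Prod>i\<in>UNIV. \<integral>\<^sup>+t. G i t \<partial>lborel) = 
     (\<integral>\<^sup>+t. ennreal ((G1 t)^2) \<partial>lborel) * (\<integral>\<^sup>+t. ennreal ((G2 t)^2) \<partial>lborel) * emeasure lborel E"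
    unfolding prod_3 G_def by (simp add: mult.assoc)
  finally show ?thesis by (simp add: T_def[abs_def])
qed



lemma xi_of_nth [simp]:
  "xi_of x $ 1 = x$1" "xi_of x $ 2 = x$2" "xi_of x $ 3 = x$3" "xi_of x $ 4 = x$1 - x$2 + x$3"
  unfolding xi_of_def vector_def by simp_all

lemma axis3 [simp]:
  "(axis 1 1 :: real^3) $ 1 = 1" "(axis 1 1 :: real^3) $ 2 = 0" "(axis 1 1 :: real^3) $ 3 = 0"
  "(axis 2 1 :: real^3) $ 1 = 0" "(axis 2 1 :: real^3) $ 2 = 1" "(axis 2 1 :: real^3) $ 3 = 0"
  "(axis 3 1 :: real^3) $ 1 = 0" "(axis 3 1 :: real^3) $ 2 = 0" "(axis 3 1 :: real^3) $ 3 = 1"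
  by (simp_all add: axis_def)

definition e3 :: "3 \<Rightarrow> real^3" where "e3 j = axis j 1"

lemma det_vec3:
  fixes u v w :: "real^3 \<Rightarrow> real"
  shows "det (matrix (\<lambda>x. vector [u x, v x, w x] :: real^3)) =
     u (e3 1) * v (e3 2) * w (e3 3) + u (e3 2) * v (e3 3) * w (e3 1) + u (e3 3) * v (e3 1) * w (e3 2)
   - u (e3 1) * v (e3 3) * w (e3 2) - u (e3 2) * v (e3 1) * w (e3 3) - u (e3 3) * v (e3 2) * w (e3 1)"
  by (simp add: det_3 matrix_def e3_def)

lemma lin_expand3:
  fixes f :: "real^3 \<Rightarrow> real"
  assumes "linear f"
  shows "f x = x$1 * f (e3 1) + x$2 * f (e3 2) + x$3 * f (e3 3)"
proof -
  have "f x = f (\<Sum>i\<in>UNIV. (x$i) *s axis i 1)" by (simp add: basis_expansion)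
  also have "\<dots> = (\<Sum>i\<in>UNIV. x$i * f (axis i 1))"
    using assms by (simp add: linear_sum linear_cmul scalar_mult_eq_scaleR)
  finally show ?thesis by (simp add: sum_3 e3_def)
qed

lemma cross_case:
  fixes p1 q1 r1 p2 q2 r2 :: real
  assumes "\<not> ((r1 \<noteq> 0 \<and> p2 + q2 \<noteq> 0) \<or> (p1 + q1 \<noteq> 0 \<and> r2 \<noteq> 0) \<or>
             (q1 \<noteq> 0 \<and> p2 - r2 \<noteq> 0) \<or> (p1 - r1 \<noteq> 0 \<and> q2 \<noteq> 0) \<or>
             (q1 + r1 \<noteq> 0 \<and> p2 \<noteq> 0) \<or> (p1 \<noteq> 0 \<and> q2 + r2 \<noteq> 0))"
  shows "p1 * q2 = p2 * q1 \<and> p1 * r2 = p2 * r1 \<and> q1 * r2 = q2 * r1"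
proof -
  have "(r1 = 0 \<or> p2 + q2 = 0) \<and> (p1 + q1 = 0 \<or> r2 = 0) \<and> (q1 = 0 \<or> p2 - r2 = 0) \<and>
        (p1 - r1 = 0 \<or> q2 = 0) \<and> (q1 + r1 = 0 \<or> p2 = 0) \<and> (p1 = 0 \<or> q2 + r2 = 0)"
    using assms by blast
  then show ?thesis
    apply (elim conjE disjE)
    apply (simp_all add: algebra_simps eq_neg_iff_add_eq_0[symmetric] flip: eq_iff_diff_eq_0)
    done
qed

lemma dep_of_cross:
  fixes p1 q1 r1 p2 q2 r2 :: real
  assumes "p1 * q2 = p2 * q1" "p1 * r2 = p2 * r1" "q1 * r2 = q2 * r1"
  shows "\<exists>c1 c2. (c1 \<noteq> 0 \<or> c2 \<noteq> 0) \<and> c1 * p1 + c2 * p2 = 0 \<and> c1 * q1 + c2 * q2 = 0 \<and> c1 * r1 + c2 * r2 = 0"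
proof (cases "p1 \<noteq> 0")
  case True then show ?thesis using assms
    by (intro exI[of _ p2] exI[of _ "-p1"]) (auto simp: algebra_simps)
next
  case F1: False show ?thesis
  proof (cases "q1 \<noteq> 0")
    case True then show ?thesis using assms F1
      by (intro exI[of _ q2] exI[of _ "-q1"]) (auto simp: algebra_simps)
  next
    case F2: False show ?thesis
    proof (cases "r1 \<noteq> 0")
      case True then show ?thesis using assms F1 F2
        by (intro exI[of _ r2] exI[of _ "-r1"]) (auto simp: algebra_simps)
    next
      case False then show ?thesis using F1 F2
        by (intro exI[of _ 1] exI[of _ 0]) auto
    qed
  qed
qed

lemma linear_xi_of: "linear xi_of"
  by (rule linearI) (simp_all add: vec_eq_iff forall_4 algebra_simps)

lemma decomp4:
  fixes \<xi> :: "real^4"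
  shows "\<xi> = xi_of (vector [\<xi>$1, \<xi>$2, \<xi>$3]) - ell0 \<xi> *\<^sub>R axis 4 1"
  by (simp add: vec_eq_iff forall_4 ell0_def axis_def)

lemma choose_abcd:
  fixes L :: "2 \<Rightarrow> (real^4 \<Rightarrow> real)"
  assumes lin: "\<And>m. linear (L m)"
    and indep: "\<And>(c0::real) (c::2 \<Rightarrow> real).
                 (\<forall>\<xi>. c0 * ell0 \<xi> + (\<Sum>m\<in>UNIV. c m * L m \<xi>) = 0)
                 \<Longrightarrow> c0 = 0 \<and> (\<forall>m. c m = 0)"
  shows "\<exists>a b c d::4. distinct [a,b,c,d] \<and>
     det (matrix (\<lambda>x. vector [xi_of x $ a, xi_of x $ b, L 1 (xi_of x)] :: real^3)) \<noteq> 0 \<and>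
     det (matrix (\<lambda>x. vector [xi_of x $ c, xi_of x $ d, L 2 (xi_of x)] :: real^3)) \<noteq> 0"
proof -
  define P where "P m j = L m (xi_of (e3 j))" for m j
  have linM: "linear (\<lambda>x. L m (xi_of x))" for m
    using linear_compose[OF linear_xi_of lin] by (simp add: o_def)
  have six: "(P 1 3 \<noteq> 0 \<and> P 2 1 + P 2 2 \<noteq> 0) \<or> (P 1 1 + P 1 2 \<noteq> 0 \<and> P 2 3 \<noteq> 0) \<or>
             (P 1 2 \<noteq> 0 \<and> P 2 1 - P 2 3 \<noteq> 0) \<or> (P 1 1 - P 1 3 \<noteq> 0 \<and> P 2 2 \<noteq> 0) \<or>
             (P 1 2 + P 1 3 \<noteq> 0 \<and> P 2 1 \<noteq> 0) \<or> (P 1 1 \<noteq> 0 \<and> P 2 2 + P 2 3 \<noteq> 0)"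
  proof (rule ccontr)
    assume "\<not> ?thesis"
    from cross_case[OF this] obtain c1 c2 where c12: "c1 \<noteq> 0 \<or> c2 \<noteq> 0"
      and e: "c1 * P 1 1 + c2 * P 2 1 = 0" "c1 * P 1 2 + c2 * P 2 2 = 0" "c1 * P 1 3 + c2 * P 2 3 = 0"
      using dep_of_cross by metis
    have z: "c1 * L 1 (xi_of x) + c2 * L 2 (xi_of x) = 0" for x
    proof -
      have "c1 * L 1 (xi_of x) + c2 * L 2 (xi_of x)
          = x$1 * (c1 * P 1 1 + c2 * P 2 1) + x$2 * (c1 * P 1 2 + c2 * P 2 2) + x$3 * (c1 * P 1 3 + c2 * P 2 3)"
        using lin_expand3[OF linM, of 1 x] lin_expand3[OF linM, of 2 x] unfolding P_def
        by (simp add: algebra_simps)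
      then show ?thesis using e by simp
    qed
    define c where "c = (\<lambda>m::2. if m = 1 then c1 else c2)"
    define c0 where "c0 = c1 * L 1 (axis 4 1) + c2 * L 2 (axis 4 1)"
    have "\<forall>\<xi>. c0 * ell0 \<xi> + (\<Sum>m\<in>UNIV. c m * L m \<xi>) = 0"
    proof
      fix \<xi> :: "real^4"
      have Lm: "L m \<xi> = L m (xi_of (vector [\<xi>$1, \<xi>$2, \<xi>$3])) - ell0 \<xi> * L m (axis 4 1)" for m
        by (subst decomp4) (simp add: linear_diff[OF lin] linear_cmul[OF lin])
      show "c0 * ell0 \<xi> + (\<Sum>m\<in>UNIV. c m * L m \<xi>) = 0"
        using z[of "vector [\<xi>$1, \<xi>$2, \<xi>$3]"]
        by (simp add: sum_2 c_def c0_def Lm algebra_simps)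
    qed
    from indep[OF this] have "c 1 = 0" "c 2 = 0" by auto
    then show False using c12 by (simp add: c_def)
  qed
  have D: "det (matrix (\<lambda>x. vector [xi_of x $ a, xi_of x $ b, L m (xi_of x)] :: real^3)) =
     (xi_of (e3 1) $ a) * (xi_of (e3 2) $ b) * P m 3 + (xi_of (e3 2) $ a) * (xi_of (e3 3) $ b) * P m 1
   + (xi_of (e3 3) $ a) * (xi_of (e3 1) $ b) * P m 2 - (xi_of (e3 1) $ a) * (xi_of (e3 3) $ b) * P m 2
   - (xi_of (e3 2) $ a) * (xi_of (e3 1) $ b) * P m 3 - (xi_of (e3 3) $ a) * (xi_of (e3 2) $ b) * P m 1" for a b m
    unfolding det_vec3 P_def by simp
  from six show ?thesis
  proof (elim disjE)
    assume h: "P 1 3 \<noteq> 0 \<and> P 2 1 + P 2 2 \<noteq> 0"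
    show ?thesis by (rule exI[of _ 1], rule exI[of _ 2], rule exI[of _ 3], rule exI[of _ 4])
                    (use h in \<open>simp only: D, simp add: e3_def algebra_simps\<close>)
  next
    assume h: "P 1 1 + P 1 2 \<noteq> 0 \<and> P 2 3 \<noteq> 0"
    show ?thesis by (rule exI[of _ 3], rule exI[of _ 4], rule exI[of _ 1], rule exI[of _ 2])
                    (use h in \<open>simp only: D, simp add: e3_def algebra_simps\<close>)
  next
    assume h: "P 1 2 \<noteq> 0 \<and> P 2 1 - P 2 3 \<noteq> 0"
    show ?thesis by (rule exI[of _ 1], rule exI[of _ 3], rule exI[of _ 2], rule exI[of _ 4])
                    (use h in \<open>simp only: D, simp add: e3_def algebra_simps\<close>)
  next
    assume h: "P 1 1 - P 1 3 \<noteq> 0 \<and> P 2 2 \<noteq> 0"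
    show ?thesis by (rule exI[of _ 2], rule exI[of _ 4], rule exI[of _ 1], rule exI[of _ 3])
                    (use h in \<open>simp only: D, simp add: e3_def algebra_simps\<close>)
  next
    assume h: "P 1 2 + P 1 3 \<noteq> 0 \<and> P 2 1 \<noteq> 0"
    show ?thesis by (rule exI[of _ 1], rule exI[of _ 4], rule exI[of _ 2], rule exI[of _ 3])
                    (use h in \<open>simp only: D, simp add: e3_def algebra_simps\<close>)
  next
    assume h: "P 1 1 \<noteq> 0 \<and> P 2 2 + P 2 3 \<noteq> 0"
    show ?thesis by (rule exI[of _ 2], rule exI[of _ 3], rule exI[of _ 1], rule exI[of _ 4])
                    (use h in \<open>simp only: D, simp add: e3_def algebra_simps\<close>)
  qed
qed



lemma ennsqrt_sq: "(ennsqrt x)^2 = x"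
proof (cases "x = \<infinity>")
  case True then show ?thesis by (simp add: ennsqrt_def)
next
  case False
  then have "(ennreal (sqrt (enn2real x)))^2 = ennreal (enn2real x)"
    by (subst ennreal_power) auto
  then show ?thesis using False by (simp add: ennsqrt_def ennreal_enn2real_if)
qed

lemma ennreal_sq_le_imp_le:
  assumes "(x::ennreal)^2 \<le> y^2" shows "x \<le> y"
proof (rule ccontr)
  assume "\<not> x \<le> y"
  then have yx: "y < x" by simp
  then have "y \<noteq> top" by auto
  then obtain b where yb: "y = ennreal b" "0 \<le> b" by (cases y) auto
  show False
  proof (cases "x = top")
    case True
    then have "x^2 = top" by simp
    moreover have "y^2 \<noteq> top" using yb by (simp add: ennreal_power)
    ultimately show False using assms by (simp add: top_unique)
  next
    case False
    then obtain a where xa: "x = ennreal a" "0 \<le> a" by (cases x) auto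
    with yx yb have "b < a" by (simp add: ennreal_less_iff)
    then have "b^2 < a^2" using yb by (simp add: power_strict_mono)
    moreover have "a^2 \<le> b^2" using assms xa yb by (simp add: ennreal_power)
    ultimately show False by simp
  qed
qed

lemma linear_xi_nth: "linear (\<lambda>x. xi_of x $ n)"
proof -
  have "xi_of (x + y) = xi_of x + xi_of y" "xi_of (c *\<^sub>R x) = c *\<^sub>R xi_of x" for x y c
    using linear_xi_of by (simp_all add: linear_add linear_cmul)
  then show ?thesis by (intro linearI) simp_all
qed

lemma L2sq:
  fixes g :: "real \<Rightarrow> real"
  assumes "g \<in> borel_measurable lborel" "integrable lborel (\<lambda>t. (g t)^2)"
  shows "(\<integral>\<^sup>+t. ennreal ((g t)^2) \<partial>lborel) = ennreal ((L2norm g)^2)"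
proof -
  have "0 \<le> (LINT t|lborel. (g t)^2)" by (rule integral_nonneg_AE) simp
  then have "(L2norm g)^2 = (LINT t|lborel. (g t)^2)" by (simp add: L2norm_def)
  moreover have "(\<integral>\<^sup>+t. ennreal ((g t)^2) \<partial>lborel) = ennreal (LINT t|lborel. (g t)^2)"
    using assms by (intro nn_integral_eq_integral) auto
  ultimately show ?thesis by simp
qed

lemma UNIV4_distinct:
  fixes a b c d :: 4
  assumes "distinct [a,b,c,d]"
  shows "UNIV = {a,b,c,d}"
proof -
  have "card {a,b,c,d} = 4" using assms by simp
  then show ?thesis
    by (intro card_subset_eq[symmetric]) auto
qed

lemma prod_2: "prod f (UNIV::2 set) = f 1 * f 2"
  unfolding UNIV_2 by simp
lemma prod_4d:
  fixes a b c d :: 4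
  assumes "distinct [a,b,c,d]"
  shows "prod f UNIV = f a * f b * f c * f d"
  unfolding UNIV4_distinct[OF assms] using assms by (simp add: mult.assoc)

theorem lemma4p5:
  fixes L :: "2 \<Rightarrow> (real^4 \<Rightarrow> real)"
  assumes lin: "\<And>m. linear (L m)"
    and indep: "\<And>(c0::real) (c::2 \<Rightarrow> real).
                 (\<forall>\<xi>. c0 * ell0 \<xi> + (\<Sum>m\<in>UNIV. c m * L m \<xi>) = 0)
                 \<Longrightarrow> c0 = 0 \<and> (\<forall>m. c m = 0)"
  shows "\<exists>C::real. \<forall>(g::4 \<Rightarrow> real \<Rightarrow> real) (E::2 \<Rightarrow> real set).
           (\<forall>n. g n \<in> borel_measurable lborel \<and> (\<forall>t. 0 \<le> g n t)
                 \<and> integrable lborel (\<lambda>t. (g n t)^2))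
           \<and> (\<forall>m. E m \<in> sets lborel)
           \<longrightarrow> (\<integral>\<^sup>+ x. ennreal ((\<Prod>n\<in>UNIV. g n (xi_of x $ n))
                               * (\<Prod>m\<in>UNIV. indicator (E m) (L m (xi_of x)))) \<partial>lborel)
               \<le> ennreal C * (\<Prod>m\<in>UNIV. ennsqrt (emeasure lborel (E m)))
                   * ennreal (\<Prod>n\<in>UNIV. L2norm (g n))"
proof -
  obtain a b c d :: 4 where dist: "distinct [a,b,c,d]"
    and D1: "det (matrix (\<lambda>x. vector [xi_of x $ a, xi_of x $ b, L 1 (xi_of x)] :: real^3)) \<noteq> 0"
    and D2: "det (matrix (\<lambda>x. vector [xi_of x $ c, xi_of x $ d, L 2 (xi_of x)] :: real^3)) \<noteq> 0"
    using choose_abcd[where L=L, OF lin indep] by blast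
  define d1 where "d1 = \<bar>det (matrix (\<lambda>x. vector [xi_of x $ a, xi_of x $ b, L 1 (xi_of x)] :: real^3))\<bar>"
  define d2 where "d2 = \<bar>det (matrix (\<lambda>x. vector [xi_of x $ c, xi_of x $ d, L 2 (xi_of x)] :: real^3))\<bar>"
  have d1p: "d1 > 0" and d2p: "d2 > 0" using D1 D2 by (auto simp: d1_def d2_def)
  define C where "C = 1 / sqrt (d1 * d2)"
  have C0: "0 \<le> C" using d1p d2p by (simp add: C_def)
  have linM: "linear (\<lambda>x. L m (xi_of x))" for m
    using linear_compose[OF linear_xi_of lin] by (simp add: o_def)
  have U: "UNIV = {a,b,c,d}" by (rule UNIV4_distinct[OF dist])
  show ?thesis
  proof (intro exI[of _ C] allI impI)
    fix g :: "4 \<Rightarrow> real \<Rightarrow> real" and E :: "2 \<Rightarrow> real set"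
    assume H: "(\<forall>n. g n \<in> borel_measurable lborel \<and> (\<forall>t. 0 \<le> g n t)
                 \<and> integrable lborel (\<lambda>t. (g n t)^2)) \<and> (\<forall>m. E m \<in> sets lborel)"
    have gm[measurable]: "g n \<in> borel_measurable borel" for n using H by auto
    have gn: "0 \<le> g n t" for n t using H by auto
    have Em[measurable]: "E m \<in> sets borel" for m using H by auto
    have m1[measurable]: "(\<lambda>x. xi_of x $ n) \<in> borel_measurable borel" for n by (rule lin_meas[OF linear_xi_nth])
    have m2[measurable]: "(\<lambda>x. L m (xi_of x)) \<in> borel_measurable borel" for m by (rule lin_meas[OF linM])
    define F where "F x = ennreal (g a (xi_of x $ a) * g b (xi_of x $ b) * indicator (E 1) (L 1 (xi_of x)))" for x
    define G where "G x = ennreal (g c (xi_of x $ c) * g d (xi_of x $ d) * indicator (E 2) (L 2 (xi_of x)))" for x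
    have Fm: "F \<in> borel_measurable lborel" unfolding F_def by measurable
    have Gm: "G \<in> borel_measurable lborel" unfolding G_def by measurable
    have eq: "ennreal ((\<Prod>n\<in>UNIV. g n (xi_of x $ n)) * (\<Prod>m\<in>UNIV. indicator (E m) (L m (xi_of x))))
        = F x * G x" for x
    proof -
      have e1: "(\<Prod>n\<in>UNIV. g n (xi_of x $ n)) = g a (xi_of x $ a) * g b (xi_of x $ b) * (g c (xi_of x $ c) * g d (xi_of x $ d))"
        using prod_4d[OF dist] by (simp add: mult.assoc)
      have e2: "(\<Prod>m\<in>UNIV. indicator (E m) (L m (xi_of x)) :: real) = indicator (E 1) (L 1 (xi_of x)) * indicator (E 2) (L 2 (xi_of x))"
        by (rule prod_2)
      have e3: "g a (xi_of x $ a) * g b (xi_of x $ b) * (g c (xi_of x $ c) * g d (xi_of x $ d)) *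
          (indicator (E 1) (L 1 (xi_of x)) * indicator (E 2) (L 2 (xi_of x)))
        = (g a (xi_of x $ a) * g b (xi_of x $ b) * indicator (E 1) (L 1 (xi_of x))) *
          (g c (xi_of x $ c) * g d (xi_of x $ d) * indicator (E 2) (L 2 (xi_of x)))"
        by (simp only: mult_ac)
      have e4: "ennreal ((g a (xi_of x $ a) * g b (xi_of x $ b) * indicator (E 1) (L 1 (xi_of x))) *
          (g c (xi_of x $ c) * g d (xi_of x $ d) * indicator (E 2) (L 2 (xi_of x)))) = F x * G x"
        unfolding F_def G_def by (rule ennreal_mult) (simp_all add: gn)
      show ?thesis by (subst e1, subst e2, subst e3, rule e4)
    qed
    have L2sq': "(\<integral>\<^sup>+t. ennreal ((g n t)^2) \<partial>lborel) = ennreal ((L2norm (g n))^2)" for n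
      using H by (intro L2sq) auto
    have IF: "(\<integral>\<^sup>+x. F x ^ 2 \<partial>lborel) = ennreal (1 / d1) *
       (ennreal ((L2norm (g a))^2) * ennreal ((L2norm (g b))^2) * emeasure lborel (E 1))"
      unfolding F_def d1_def
      using half_bound[OF linear_xi_nth linear_xi_nth linM D1 gm gm Em gn gn] by (simp only: L2sq')
    have IG: "(\<integral>\<^sup>+x. G x ^ 2 \<partial>lborel) = ennreal (1 / d2) *
       (ennreal ((L2norm (g c))^2) * ennreal ((L2norm (g d))^2) * emeasure lborel (E 2))"
      unfolding G_def d2_def
      using half_bound[OF linear_xi_nth linear_xi_nth linM D2 gm gm Em gn gn] by (simp only: L2sq')
    have CS: "(\<integral>\<^sup>+x. F x * G x \<partial>lborel)^2 \<le> (\<integral>\<^sup>+x. F x ^ 2 \<partial>lborel) * (\<integral>\<^sup>+x. G x ^ 2 \<partial>lborel)"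
      by (rule Cauchy_Schwarz_nn_integral[OF Fm Gm])
    define R where "R = ennreal C * (\<Prod>m\<in>UNIV. ennsqrt (emeasure lborel (E m))) * ennreal (\<Prod>n\<in>UNIV. L2norm (g n))"
    have L2nn: "0 \<le> L2norm (g n)" for n by (simp add: L2norm_def)
    define A where "A = (L2norm (g a))^2"
    define B where "B = (L2norm (g b))^2"
    define Cc where "Cc = (L2norm (g c))^2"
    define Dd where "Dd = (L2norm (g d))^2"
    define m1 where "m1 = emeasure lborel (E 1)"
    define m2 where "m2 = emeasure lborel (E 2)"
    have P2: "(\<Prod>m\<in>UNIV. ennsqrt (emeasure lborel (E m))) = ennsqrt m1 * ennsqrt m2"
      unfolding prod_2 m1_def m2_def ..
    have P4: "(\<Prod>n\<in>UNIV. L2norm (g n)) = L2norm (g a) * L2norm (g b) * L2norm (g c) * L2norm (g d)"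
      by (rule prod_4d[OF dist])
    have Pnn: "0 \<le> L2norm (g a) * L2norm (g b) * L2norm (g c) * L2norm (g d)"
      using L2nn by simp
    have Psq: "ennreal ((L2norm (g a) * L2norm (g b) * L2norm (g c) * L2norm (g d))^2)
        = ennreal A * ennreal B * ennreal Cc * ennreal Dd"
      unfolding A_def B_def Cc_def Dd_def power_mult_distrib
      by (simp add: ennreal_mult)
    have "R^2 = (ennreal C)^2 * (ennsqrt m1)^2 * (ennsqrt m2)^2 * (ennreal (L2norm (g a) * L2norm (g b) * L2norm (g c) * L2norm (g d)))^2"
      unfolding R_def P2 P4 by (simp only: power_mult_distrib mult.assoc)
    also have "\<dots> = ennreal (C^2) * m1 * m2 * (ennreal A * ennreal B * ennreal Cc * ennreal Dd)"
      by (simp only: ennsqrt_sq ennreal_power[OF C0] ennreal_power[OF Pnn] Psq)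
    also have "\<dots> = (\<integral>\<^sup>+x. F x ^ 2 \<partial>lborel) * (\<integral>\<^sup>+x. G x ^ 2 \<partial>lborel)"
    proof -
      have "C^2 = 1 / d1 * (1 / d2)" using d1p d2p by (simp add: C_def power_divide)
      then have "ennreal (C^2) = ennreal (1 / d1 * (1 / d2))" by simp
      also have "\<dots> = ennreal (1 / d1) * ennreal (1 / d2)"
        by (rule ennreal_mult) (use d1p d2p in auto)
      finally have e: "ennreal (C^2) = ennreal (1 / d1) * ennreal (1 / d2)" .
      show ?thesis unfolding IF IG e
        by (simp only: A_def[symmetric] B_def[symmetric] Cc_def[symmetric] Dd_def[symmetric]
              m1_def[symmetric] m2_def[symmetric] ac_simps)
    qed
    finally have "(\<integral>\<^sup>+x. F x * G x \<partial>lborel)^2 \<le> R^2" using CS by simp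
    then have fin: "(\<integral>\<^sup>+x. F x * G x \<partial>lborel) \<le> R" by (rule ennreal_sq_le_imp_le)
    show "(\<integral>\<^sup>+ x. ennreal ((\<Prod>n\<in>UNIV. g n (xi_of x $ n))
                               * (\<Prod>m\<in>UNIV. indicator (E m) (L m (xi_of x)))) \<partial>lborel)
               \<le> ennreal C * (\<Prod>m\<in>UNIV. ennsqrt (emeasure lborel (E m)))
                   * ennreal (\<Prod>n\<in>UNIV. L2norm (g n))"
    proof -
      have I: "(\<integral>\<^sup>+ x. ennreal ((\<Prod>n\<in>UNIV. g n (xi_of x $ n))
                               * (\<Prod>m\<in>UNIV. indicator (E m) (L m (xi_of x)))) \<partial>lborel)
          = (\<integral>\<^sup>+x. F x * G x \<partial>lborel)"
        by (intro nn_integral_cong eq)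
      show ?thesis unfolding I R_def[symmetric] by (rule fin)
    qed
  qed
qed


end
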